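(* Let $X\subset\mathbb{R}^n$ be a closed set which is the closure of its interior, $f:X\to\mathbb{R}^n$ locally Lipschitz, and suppose $\dot x=f(x)$ is forward complete with flow $\varphi_t$. Let $K$ be a closed convex cone with nonempty interior and suppose the system is strongly monotone in reversed time: for every $\xi_1,\xi_2\in X$ and every $t<0$ such that $\varphi_t(\xi_1),\varphi_t(\xi_2)$ are defined, $\xi_1\succ\xi_2$ implies $\varphi_t(\xi_1)\gg\varphi_t(\xi_2)$. Let $v\in\operatorname{int}(K)$, $|v|=1$, with $X$ invariant under translation by $v$ and $\varphi_t(\xi+\lambda v)=\varphi_t(\xi)+\lambda v$ for all $\lambda\in\mathbb{R}$, $\xi\in X$ and all $t$ at which $\varphi_t(\xi)$ is defined. Let $\pi_v(x)=x-(v'x)v$. Then for every $\xi\in X$ such that $\pi_v(\varphi_t(\xi))$ is bounded for $t\ge0$, $\pi_v(\varphi_t(\xi))$ converges as $t\to\infty$ to an equilibrium of the projected system $\dot{\tilde x}=(I-vv')f(\tilde x)$ on $X\cap v^\perp$; moreover this equilibrium is unique (the projected system has no other equilibrium).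
   Context: The cone $K$ satisfies $K+K\subset K$, $\alpha K\subset K$ for $\alpha\ge0$, $K\cap(-K)=\{0\}$. $\xi_1\succeq\xi_2$ iff $\xi_1-\xi_2\in K$; $\xi_1\succ\xi_2$ iff additionally $\xi_1\neq\xi_2$; $\xi_1\gg\xi_2$ iff $\xi_1-\xi_2\in\operatorname{int}(K)$. Forward complete means every solution is uniquely defined in $X$ on an interval containing $[0,\infty)$ in its interior. *)

theory Defs
  imports "HOL-Analysis.Analysis"
begin

definition is_solution :: "('a::euclidean_space \<Rightarrow> 'a) \<Rightarrow> 'a set \<Rightarrow> real set \<Rightarrow> (real \<Rightarrow> 'a) \<Rightarrow> 'a \<Rightarrow> bool" where
  "is_solution f X I x \<xi> \<longleftrightarrow> is_interval I \<and> open I \<and> 0 \<in> I \<and> x 0 = \<xi> \<and>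
     (\<forall>t\<in>I. x t \<in> X \<and> (x has_vector_derivative f (x t)) (at t))"

definition forward_complete :: "('a::euclidean_space \<Rightarrow> 'a) \<Rightarrow> 'a set \<Rightarrow> bool" where
  "forward_complete f X \<longleftrightarrow>
     (\<forall>\<xi>\<in>X. \<exists>I x. is_solution f X I x \<xi> \<and> {0..} \<subseteq> I) \<and>
     (\<forall>\<xi> I1 x1 I2 x2. is_solution f X I1 x1 \<xi> \<longrightarrow> is_solution f X I2 x2 \<xi> \<longrightarrow>
        (\<forall>t\<in>I1 \<inter> I2. x1 t = x2 t))"

definition flow_defined :: "('a::euclidean_space \<Rightarrow> 'a) \<Rightarrow> 'a set \<Rightarrow> real \<Rightarrow> 'a \<Rightarrow> bool" where
  "flow_defined f X t \<xi> \<longleftrightarrow> (\<exists>I x. is_solution f X I x \<xi> \<and> t \<in> I)"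

definition flow :: "('a::euclidean_space \<Rightarrow> 'a) \<Rightarrow> 'a set \<Rightarrow> real \<Rightarrow> 'a \<Rightarrow> 'a" where
  "flow f X t \<xi> = (THE y. \<exists>I x. is_solution f X I x \<xi> \<and> t \<in> I \<and> x t = y)"

definition is_cone_K :: "'a::euclidean_space set \<Rightarrow> bool" where
  "is_cone_K K \<longleftrightarrow> (\<forall>a\<in>K. \<forall>b\<in>K. a + b \<in> K) \<and> (\<forall>\<alpha>\<ge>0. \<forall>a\<in>K. \<alpha> *\<^sub>R a \<in> K) \<and>
     K \<inter> uminus ` K = {0}"

definition succeq :: "'a::euclidean_space set \<Rightarrow> 'a \<Rightarrow> 'a \<Rightarrow> bool" where
  "succeq K a b \<longleftrightarrow> a - b \<in> K"

definition succ :: "'a::euclidean_space set \<Rightarrow> 'a \<Rightarrow> 'a \<Rightarrow> bool" where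
  "succ K a b \<longleftrightarrow> a - b \<in> K \<and> a \<noteq> b"

definition gg :: "'a::euclidean_space set \<Rightarrow> 'a \<Rightarrow> 'a \<Rightarrow> bool" where
  "gg K a b \<longleftrightarrow> a - b \<in> interior K"

definition proj_v :: "'a::euclidean_space \<Rightarrow> 'a \<Rightarrow> 'a" where
  "proj_v v x = x - (v \<bullet> x) *\<^sub>R v"

definition proj_equilibrium :: "('a::euclidean_space \<Rightarrow> 'a) \<Rightarrow> 'a set \<Rightarrow> 'a \<Rightarrow> 'a \<Rightarrow> bool" where
  "proj_equilibrium f X v e \<longleftrightarrow> e \<in> X \<and> v \<bullet> e = 0 \<and> f e - (v \<bullet> f e) *\<^sub>R v = 0"

end

theory Submission imports Defs begin


lemma mono_sup_lim:
  fixes g :: "real \<Rightarrow> real"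
  assumes mono: "\<And>s t. 0 \<le> s \<Longrightarrow> s \<le> t \<Longrightarrow> g s \<le> g t"
    and bd: "\<And>t. 0 \<le> t \<Longrightarrow> g t \<le> B"
  shows "(g \<longlongrightarrow> Sup (g ` {0..})) at_top" and "\<And>t. 0 \<le> t \<Longrightarrow> g t \<le> Sup (g ` {0..})"
proof -
  have bdd: "bdd_above (g ` {0..})" using bd by (auto intro!: bdd_aboveI[where M=B])
  show le: "\<And>t. 0 \<le> t \<Longrightarrow> g t \<le> Sup (g ` {0..})" using bdd by (auto intro!: cSup_upper)
  show "(g \<longlongrightarrow> Sup (g ` {0..})) at_top"
  proof (rule order_tendstoI)
    fix a assume "a < Sup (g ` {0..})"
    then obtain t0 where t0: "t0 \<ge> 0" "a < g t0" using less_cSup_iff[OF _ bdd] by fastforce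
    show "\<forall>\<^sub>F t in at_top. a < g t"
      using eventually_ge_at_top[of t0] by eventually_elim (use t0 mono in fastforce)
  next
    fix a assume a: "a > Sup (g ` {0..})"
    show "\<forall>\<^sub>F t in at_top. g t < a"
      using eventually_ge_at_top[of 0] by eventually_elim (use le a in fastforce)
  qed
qed

locale sys =
  fixes f :: "'a::euclidean_space \<Rightarrow> 'a" and X K :: "'a set" and v :: 'a
  assumes X_closed: "closed X"
    and f_cont: "continuous_on X f"
    and fc: "forward_complete f X"
    and K_cone: "is_cone_K K" and K_closed: "closed K"
    and mono: "\<And>\<xi>1 \<xi>2 t. \<xi>1 \<in> X \<Longrightarrow> \<xi>2 \<in> X \<Longrightarrow> t < 0 \<Longrightarrow>
        flow_defined f X t \<xi>1 \<Longrightarrow> flow_defined f X t \<xi>2 \<Longrightarrow>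
        succ K \<xi>1 \<xi>2 \<Longrightarrow> gg K (flow f X t \<xi>1) (flow f X t \<xi>2)"
    and v_int: "v \<in> interior K" and v_norm: "norm v = 1"
    and X_transl: "\<And>\<xi> c. \<xi> \<in> X \<Longrightarrow> \<xi> + c *\<^sub>R v \<in> X"
    and flow_transl: "\<And>\<xi> c t. \<xi> \<in> X \<Longrightarrow> flow_defined f X t \<xi> \<Longrightarrow>
        flow_defined f X t (\<xi> + c *\<^sub>R v) \<and>
        flow f X t (\<xi> + c *\<^sub>R v) = flow f X t \<xi> + c *\<^sub>R v"
begin

lemma K_add: "a \<in> K \<Longrightarrow> b \<in> K \<Longrightarrow> a + b \<in> K"
  using K_cone unfolding is_cone_K_def by blast

lemma K_scale: "\<alpha> \<ge> 0 \<Longrightarrow> a \<in> K \<Longrightarrow> \<alpha> *\<^sub>R a \<in> K"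
  using K_cone unfolding is_cone_K_def by blast

lemma K_pointed: "a \<in> K \<Longrightarrow> - a \<in> K \<Longrightarrow> a = 0"
proof -
  assume "a \<in> K" "- a \<in> K"
  then have "a \<in> K \<inter> uminus ` K" by (metis IntI image_eqI minus_minus)
  then show "a = 0" using K_cone unfolding is_cone_K_def by blast
qed

lemma v_K: "v \<in> K" using v_int interior_subset by blast

lemma v_nz: "v \<noteq> 0" using v_norm by auto

lemma K_zero: "0 \<in> K" using K_scale[of 0 v] v_K by simp

lemma scale_v_K: "\<mu> *\<^sub>R v \<in> K \<Longrightarrow> \<mu> \<ge> 0"
proof (rule ccontr)
  assume h: "\<mu> *\<^sub>R v \<in> K" "\<not> \<mu> \<ge> 0"
  then have "(1 / (- \<mu>)) *\<^sub>R (\<mu> *\<^sub>R v) \<in> K" using K_scale[of "1/(- \<mu>)" "\<mu> *\<^sub>R v"] by auto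
  moreover have "(1 / (- \<mu>)) *\<^sub>R (\<mu> *\<^sub>R v) = - v" using h by auto
  ultimately have "- v \<in> K" by simp
  then have "- v = 0" using K_pointed[of "- v"] v_K by simp
  then show False using v_nz by simp
qed

lemma scale_v_K_iff: "\<mu> *\<^sub>R v \<in> K \<longleftrightarrow> \<mu> \<ge> 0"
  using scale_v_K K_scale v_K by blast

definition rr :: real where "rr = (SOME r. r > 0 \<and> cball v r \<subseteq> K)"

lemma rr: "rr > 0 \<and> cball v rr \<subseteq> K"
proof -
  obtain e where e: "e > 0" "ball v e \<subseteq> K"
    using v_int mem_interior by blast
  then have "e/2 > 0 \<and> cball v (e/2) \<subseteq> K" by auto
  then show ?thesis unfolding rr_def by (rule someI)
qed

lemma rr_pos: "rr > 0" using rr by simp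

lemma absorb: "(norm d / rr) *\<^sub>R v + d \<in> K"
proof (cases "d = 0")
  case True then show ?thesis using K_scale[of 0 v] v_K by simp
next
  case False
  have "v + (rr / norm d) *\<^sub>R d \<in> cball v rr"
    using rr_pos False by (simp add: dist_norm)
  then have "v + (rr / norm d) *\<^sub>R d \<in> K" using rr by blast
  then have "(norm d / rr) *\<^sub>R (v + (rr / norm d) *\<^sub>R d) \<in> K"
    using rr_pos by (intro K_scale) auto
  moreover have "(norm d / rr) *\<^sub>R (v + (rr / norm d) *\<^sub>R d) = (norm d / rr) *\<^sub>R v + d"
    using rr_pos False by (simp add: scaleR_add_right)
  ultimately show ?thesis by simp
qed

definition U :: "'a \<Rightarrow> 'a \<Rightarrow> real" where
  "U a b = Inf {l. b + l *\<^sub>R v - a \<in> K}"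

lemma U_set_lower: "b + l *\<^sub>R v - a \<in> K \<Longrightarrow> l \<ge> - norm (a - b) / rr"
proof -
  assume h: "b + l *\<^sub>R v - a \<in> K"
  have "(norm (a - b) / rr) *\<^sub>R v + (a - b) \<in> K" by (rule absorb)
  from K_add[OF h this] have "(l + norm (a - b) / rr) *\<^sub>R v \<in> K"
    by (simp add: algebra_simps)
  then show ?thesis using scale_v_K by fastforce
qed

lemma U_set_ne: "b + (norm (b - a) / rr) *\<^sub>R v - a \<in> K"
  using absorb[of "b - a"] by (simp add: algebra_simps)

lemma U_set_closed: "closed {l. b + l *\<^sub>R v - a \<in> K}"
proof -
  have "{l. b + l *\<^sub>R v - a \<in> K} = (\<lambda>l. b + l *\<^sub>R v - a) -` K" by auto
  moreover have "closed ((\<lambda>l. b + l *\<^sub>R v - a) -` K)"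
    by (rule continuous_closed_vimage[OF K_closed]) (auto intro!: continuous_intros)
  ultimately show ?thesis by simp
qed

lemma U_bdd: "bdd_below {l. b + l *\<^sub>R v - a \<in> K}"
  using U_set_lower by (auto intro!: bdd_belowI[where m = "- norm (a - b) / rr"])

lemma U_mem: "b + U a b *\<^sub>R v - a \<in> K"
proof -
  have "U a b \<in> {l. b + l *\<^sub>R v - a \<in> K}"
    unfolding U_def
    by (rule closed_contains_Inf[OF _ _ U_set_closed]) (use U_set_ne U_bdd in auto)
  then show ?thesis by simp
qed

lemma U_le: "b + l *\<^sub>R v - a \<in> K \<Longrightarrow> U a b \<le> l"
  unfolding U_def by (rule cInf_lower) (use U_bdd in auto)

lemma U_ge: "U a b \<le> l \<Longrightarrow> b + l *\<^sub>R v - a \<in> K"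
proof -
  assume "U a b \<le> l"
  then have "(l - U a b) *\<^sub>R v \<in> K" by (intro K_scale v_K) auto
  from K_add[OF U_mem[where a=a and b=b] this] show ?thesis by (simp add: algebra_simps)
qed

lemma U_iff: "b + l *\<^sub>R v - a \<in> K \<longleftrightarrow> U a b \<le> l"
  using U_le U_ge by blast

lemma U_diff: "U a b = U (a - b) 0"
  unfolding U_def by (simp add: algebra_simps)

lemma U_transl: "U (a + \<alpha> *\<^sub>R v) (b + \<beta> *\<^sub>R v) = U a b + \<alpha> - \<beta>"
proof (rule antisym)
  have "(b + \<beta> *\<^sub>R v) + (U a b + \<alpha> - \<beta>) *\<^sub>R v - (a + \<alpha> *\<^sub>R v) = b + U a b *\<^sub>R v - a"
    by (simp add: algebra_simps)
  then show "U (a + \<alpha> *\<^sub>R v) (b + \<beta> *\<^sub>R v) \<le> U a b + \<alpha> - \<beta>"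
    using U_mem[where a=a and b=b] U_le by metis
  have "b + (U (a + \<alpha> *\<^sub>R v) (b + \<beta> *\<^sub>R v) - \<alpha> + \<beta>) *\<^sub>R v - a
     = (b + \<beta> *\<^sub>R v) + U (a + \<alpha> *\<^sub>R v) (b + \<beta> *\<^sub>R v) *\<^sub>R v - (a + \<alpha> *\<^sub>R v)"
    by (simp add: algebra_simps)
  then have "U a b \<le> U (a + \<alpha> *\<^sub>R v) (b + \<beta> *\<^sub>R v) - \<alpha> + \<beta>"
    using U_mem[where a="a + \<alpha> *\<^sub>R v" and b="b + \<beta> *\<^sub>R v"] U_le by metis
  then show "U a b + \<alpha> - \<beta> \<le> U (a + \<alpha> *\<^sub>R v) (b + \<beta> *\<^sub>R v)" by simp
qed

lemma U_upper: "U a b \<le> norm (a - b) / rr"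
  using U_le[OF U_set_ne] by (simp add: norm_minus_commute)

lemma U_sum_nonneg: "U a b + U b a \<ge> 0"
proof -
  from K_add[OF U_mem[where a=b and b=a] U_mem[where a=a and b=b]] have "(U b a + U a b) *\<^sub>R v \<in> K"
    by (simp add: algebra_simps)
  then show ?thesis using scale_v_K by (simp add: add.commute)
qed

lemma U_abs: "\<bar>U a b\<bar> \<le> norm (a - b) / rr"
  using U_upper[of a b] U_upper[of b a] U_sum_nonneg[of a b] by (simp add: norm_minus_commute)

lemma U_tri: "U a c \<le> U a b + U b c"
proof -
  from K_add[OF U_mem[where a=a and b=b] U_mem[where a=b and b=c]] have "c + (U a b + U b c) *\<^sub>R v - a \<in> K"
    by (simp add: algebra_simps)
  then show ?thesis by (rule U_le)
qed

lemma U_lip: "\<bar>U a b - U a' b'\<bar> \<le> (norm (a - a') + norm (b - b')) / rr"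
proof -
  have "U a b \<le> U a a' + U a' b' + U b' b" using U_tri[where a=a and b=a' and c=b'] U_tri[where a=a and b=b' and c=b] by simp
  moreover have "U a' b' \<le> U a' a + U a b + U b b'" using U_tri[where a=a' and b=a and c=b] U_tri[where a=a' and b=b and c=b'] by simp
  moreover note U_upper[of a a'] U_upper[of b' b] U_upper[of a' a] U_upper[of b b']
  ultimately show ?thesis using rr_pos
    by (simp add: norm_minus_commute add_divide_distrib abs_le_iff)
qed

lemma U_self_shift: "U a (a + c *\<^sub>R v) = - c"
proof -
  have "U a a = 0"
    using U_le[where a=a and b=a and l=0] K_zero U_sum_nonneg[of a a] by simp
  then show ?thesis using U_transl[of a 0 a c] by simp
qed

lemma U_sum_zero: "U a b + U b a = 0 \<Longrightarrow> a = b + U a b *\<^sub>R v"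
proof -
  assume h: "U a b + U b a = 0"
  have "a + U b a *\<^sub>R v - b \<in> K" by (rule U_mem)
  also have "a + U b a *\<^sub>R v - b = - (b + U a b *\<^sub>R v - a)"
    using h by (simp add: algebra_simps eq_neg_iff_add_eq_0[symmetric])
  finally have "b + U a b *\<^sub>R v - a = 0" using K_pointed U_mem by blast
  then show ?thesis by (simp add: algebra_simps)
qed

lemma U_cont: "continuous_on S (\<lambda>x. U (g x) (h x))" if cg: "continuous_on S g" and ch: "continuous_on S h"
  for g h :: "'b::metric_space \<Rightarrow> 'a" and S
  unfolding continuous_on_iff
proof safe
  fix x e assume x: "x \<in> S" and e: "(0::real) < e"
  have er: "e * rr / 2 > 0" using e rr_pos by simp
  obtain d1 where d1: "d1 > 0" "\<forall>y\<in>S. dist y x < d1 \<longrightarrow> dist (g y) (g x) < e * rr / 2"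
    using cg x er unfolding continuous_on_iff by blast
  obtain d2 where d2: "d2 > 0" "\<forall>y\<in>S. dist y x < d2 \<longrightarrow> dist (h y) (h x) < e * rr / 2"
    using ch x er unfolding continuous_on_iff by blast
  show "\<exists>d>0. \<forall>y\<in>S. dist y x < d \<longrightarrow> dist (U (g y) (h y)) (U (g x) (h x)) < e"
  proof (intro exI[of _ "min d1 d2"] conjI ballI impI)
    fix y assume y: "y \<in> S" "dist y x < min d1 d2"
    have "dist (U (g y) (h y)) (U (g x) (h x)) \<le> (norm (g y - g x) + norm (h y - h x)) / rr"
      using U_lip by (simp add: dist_real_def)
    also have "\<dots> < (e * rr / 2 + e * rr / 2) / rr"
      using d1 d2 y rr_pos by (intro divide_strict_right_mono add_strict_mono) (auto simp: dist_norm)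
    also have "\<dots> = e" using rr_pos by simp
    finally show "dist (U (g y) (h y)) (U (g x) (h x)) < e" .
  qed (use d1 d2 in auto)
qed


lemma sol_flow:
  assumes "is_solution f X I x \<xi>" "t \<in> I"
  shows "flow_defined f X t \<xi> \<and> flow f X t \<xi> = x t"
proof
  show "flow_defined f X t \<xi>" using assms unfolding flow_defined_def by blast
  show "flow f X t \<xi> = x t"
    unfolding flow_def
  proof (rule the_equality)
    show "\<exists>I' x'. is_solution f X I' x' \<xi> \<and> t \<in> I' \<and> x' t = x t" using assms by blast
    fix y assume "\<exists>I' x'. is_solution f X I' x' \<xi> \<and> t \<in> I' \<and> x' t = y"
    then obtain I' x' where "is_solution f X I' x' \<xi>" "t \<in> I'" "x' t = y" by blast
    then show "y = x t" using fc assms unfolding forward_complete_def by blast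
  qed
qed

lemma flow_definedE:
  assumes "flow_defined f X t \<xi>"
  obtains I x where "is_solution f X I x \<xi>" "t \<in> I" "flow f X t \<xi> = x t"
  using assms sol_flow unfolding flow_defined_def by blast

lemma sol_shift:
  assumes sol: "is_solution f X I x \<xi>" and s: "s \<in> I"
  shows "is_solution f X ((+) (- s) ` I) (\<lambda>t. x (t + s)) (x s)"
  unfolding is_solution_def
proof (intro conjI ballI)
  show "is_interval ((+) (- s) ` I)" using sol unfolding is_solution_def by simp
  show "open ((+) (- s) ` I)" using sol open_translation[of I "- s"] unfolding is_solution_def by simp
  show "0 \<in> (+) (- s) ` I" using s by force
  show "x (0 + s) = x s" by simp
  fix t assume "t \<in> (+) (- s) ` I"
  then have tI: "t + s \<in> I" by auto
  then show "x (t + s) \<in> X" using sol unfolding is_solution_def by blast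
  have d: "(x has_vector_derivative f (x (t + s))) (at (t + s))"
    using sol tI unfolding is_solution_def by blast
  have "((\<lambda>t. t + s) has_vector_derivative 1) (at t)"
    by (auto intro!: derivative_eq_intros simp: has_real_derivative_iff_has_vector_derivative[symmetric])
  from vector_diff_chain_at[OF this] d
  show "((\<lambda>t. x (t + s)) has_vector_derivative f (x (t + s))) (at t)"
    by (simp add: o_def)
qed

lemma sol_in_X: "is_solution f X I x \<xi> \<Longrightarrow> t \<in> I \<Longrightarrow> x t \<in> X"
  unfolding is_solution_def by blast

lemma sol_start: "is_solution f X I x \<xi> \<Longrightarrow> \<xi> \<in> X"
  unfolding is_solution_def by metis

lemma f_transl:
  assumes y: "y \<in> X"
  shows "f (y + c *\<^sub>R v) = f y"
proof -
  obtain I1 x1 where s1: "is_solution f X I1 x1 y" "{0..} \<subseteq> I1"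
    using fc y unfolding forward_complete_def by blast
  obtain I2 x2 where s2: "is_solution f X I2 x2 (y + c *\<^sub>R v)" "{0..} \<subseteq> I2"
    using fc X_transl[OF y] unfolding forward_complete_def by blast
  have eq: "x2 t = x1 t + c *\<^sub>R v" if t: "t \<in> I1 \<inter> I2" for t
  proof -
    have "flow_defined f X t y \<and> flow f X t y = x1 t" using sol_flow s1 t by blast
    moreover have "flow f X t (y + c *\<^sub>R v) = x2 t" using sol_flow s2 t by blast
    ultimately show ?thesis using flow_transl[OF y] by metis
  qed
  have o: "open (I1 \<inter> I2)" "0 \<in> I1 \<inter> I2" using s1 s2 unfolding is_solution_def by auto
  have "(x1 has_vector_derivative f (x1 0)) (at 0)" using s1 o unfolding is_solution_def by blast
  then have "((\<lambda>t. x1 t + c *\<^sub>R v) has_vector_derivative f y) (at 0)"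
    using s1 unfolding is_solution_def by (auto intro!: derivative_eq_intros)
  then have "(x2 has_vector_derivative f y) (at 0)"
    by (rule has_vector_derivative_transform_within_open[OF _ o(1) o(2)]) (use eq in auto)
  moreover have "(x2 has_vector_derivative f (y + c *\<^sub>R v)) (at 0)"
    using s2 o unfolding is_solution_def by auto
  ultimately show ?thesis using vector_derivative_unique_at by metis
qed

lemma sol_transl:
  assumes sol: "is_solution f X I x \<xi>"
  shows "is_solution f X I (\<lambda>t. x t + c *\<^sub>R v) (\<xi> + c *\<^sub>R v)"
  unfolding is_solution_def
proof (intro conjI ballI)
  show "is_interval I" "open I" "0 \<in> I" "x 0 + c *\<^sub>R v = \<xi> + c *\<^sub>R v"
    using sol unfolding is_solution_def by auto
  fix t assume t: "t \<in> I"
  then show "x t + c *\<^sub>R v \<in> X" using X_transl sol_in_X[OF sol] by blast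
  have "(x has_vector_derivative f (x t)) (at t)" using sol t unfolding is_solution_def by blast
  then have "((\<lambda>t. x t + c *\<^sub>R v) has_vector_derivative f (x t)) (at t)"
    by (auto intro!: derivative_eq_intros)
  then show "((\<lambda>t. x t + c *\<^sub>R v) has_vector_derivative f (x t + c *\<^sub>R v)) (at t)"
    using f_transl sol_in_X[OF sol t] by simp
qed

lemma mono_step:
  assumes a: "a \<in> X" and b: "b \<in> X" and s: "s < 0"
    and da: "flow_defined f X s a" and db: "flow_defined f X s b"
    and h: "b + l *\<^sub>R v - a \<in> K"
  shows "flow f X s b + l *\<^sub>R v - flow f X s a \<in> K"
    and "b + l *\<^sub>R v \<noteq> a \<Longrightarrow> flow f X s b + l *\<^sub>R v - flow f X s a \<in> interior K"
proof -
  have tb: "flow_defined f X s (b + l *\<^sub>R v)" "flow f X s (b + l *\<^sub>R v) = flow f X s b + l *\<^sub>R v"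
    using flow_transl[OF b db] by auto
  show int: "flow f X s b + l *\<^sub>R v - flow f X s a \<in> interior K" if ne: "b + l *\<^sub>R v \<noteq> a"
  proof -
    have "succ K (b + l *\<^sub>R v) a" using h ne unfolding succ_def by simp
    from mono[OF X_transl[OF b] a s tb(1) da this] show ?thesis
      using tb(2) unfolding gg_def by simp
  qed
  show "flow f X s b + l *\<^sub>R v - flow f X s a \<in> K"
  proof (cases "b + l *\<^sub>R v = a")
    case True
    then have "flow f X s a = flow f X s b + l *\<^sub>R v" using tb by simp
    then show ?thesis using K_zero by simp
  next
    case False
    then show ?thesis using int interior_subset by blast
  qed
qed

lemma U_back:
  assumes "a \<in> X" "b \<in> X" "s < 0" "flow_defined f X s a" "flow_defined f X s b"
  shows "U (flow f X s a) (flow f X s b) \<le> U a b"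
  using mono_step(1)[OF assms U_mem[where a=a and b=b]] U_le by blast

lemma U_back_strict:
  assumes "a \<in> X" "b \<in> X" "s < 0" "flow_defined f X s a" "flow_defined f X s b"
    and "b + U a b *\<^sub>R v \<noteq> a"
  shows "U (flow f X s a) (flow f X s b) < U a b"
proof -
  have "flow f X s b + U a b *\<^sub>R v - flow f X s a \<in> interior K"
    using mono_step(2)[OF assms(1-5) U_mem[where a=a and b=b] assms(6)] .
  then obtain e where e: "e > 0" "ball (flow f X s b + U a b *\<^sub>R v - flow f X s a) e \<subseteq> K"
    using mem_interior by blast
  have "flow f X s b + U a b *\<^sub>R v - flow f X s a - (e/2) *\<^sub>R v
     \<in> ball (flow f X s b + U a b *\<^sub>R v - flow f X s a) e"
    using e v_norm by (simp add: dist_norm)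
  then have "flow f X s b + (U a b - e/2) *\<^sub>R v - flow f X s a \<in> K"
    using e by (auto simp: algebra_simps)
  then have "U (flow f X s a) (flow f X s b) \<le> U a b - e/2" by (rule U_le)
  then show ?thesis using e by simp
qed


definition mu :: real where
  "mu = (SOME m. m > 0 \<and> (\<forall>u. norm u = 1 \<longrightarrow> m \<le> max (U u 0) (U 0 u)))"

lemma mu: "mu > 0 \<and> (\<forall>u. norm u = 1 \<longrightarrow> mu \<le> max (U u 0) (U 0 u))"
proof -
  have c: "continuous_on (sphere 0 1) (\<lambda>u. max (U u 0) (U 0 u))"
    by (intro continuous_on_max U_cont continuous_intros)
  have ne: "sphere (0::'a) 1 \<noteq> {}" using v_norm by auto
  obtain u0 where u0: "u0 \<in> sphere 0 1" "\<forall>u\<in>sphere 0 1. max (U u0 0) (U 0 u0) \<le> max (U u 0) (U 0 u)"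
    using continuous_attains_inf[OF compact_sphere ne c] by blast
  have pos: "max (U u0 0) (U 0 u0) > 0"
  proof (rule ccontr)
    assume nt: "\<not> max (U u0 0) (U 0 u0) > 0"
    then have "U u0 0 + U 0 u0 = 0" using U_sum_nonneg[of u0 0] by linarith
    moreover have "U u0 0 = 0" using nt U_sum_nonneg[of u0 0] by linarith
    ultimately have "u0 = 0" using U_sum_zero by fastforce
    then show False using u0 by simp
  qed
  have "\<exists>m. m > 0 \<and> (\<forall>u. norm u = 1 \<longrightarrow> m \<le> max (U u 0) (U 0 u))"
    using pos u0 by (intro exI[of _ "max (U u0 0) (U 0 u0)"]) auto
  then show ?thesis unfolding mu_def by (rule someI_ex)
qed

lemma normal:
  assumes p: "\<rho> *\<^sub>R v + e \<in> K" and m: "\<rho> *\<^sub>R v - e \<in> K"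
  shows "norm e \<le> \<rho> / mu"
proof -
  have "(2 * \<rho>) *\<^sub>R v \<in> K" using K_add[OF p m] by (simp add: algebra_simps scaleR_left_distrib[symmetric])
  then have r0: "\<rho> \<ge> 0" using scale_v_K by fastforce
  show ?thesis
  proof (cases "e = 0")
    case True then show ?thesis using r0 mu by simp
  next
    case False
    define u where "u = (1 / norm e) *\<^sub>R e"
    have nu: "norm u = 1" using False by (simp add: u_def)
    have "(1 / norm e) *\<^sub>R (\<rho> *\<^sub>R v - e) \<in> K" using m by (intro K_scale) auto
    then have "0 + (\<rho> / norm e) *\<^sub>R v - u \<in> K" by (simp add: u_def algebra_simps)
    then have 1: "U u 0 \<le> \<rho> / norm e" by (rule U_le)
    have "(1 / norm e) *\<^sub>R (\<rho> *\<^sub>R v + e) \<in> K" using p by (intro K_scale) auto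
    then have "u + (\<rho> / norm e) *\<^sub>R v - 0 \<in> K" by (simp add: u_def algebra_simps)
    then have 2: "U 0 u \<le> \<rho> / norm e" by (rule U_le)
    have "mu \<le> \<rho> / norm e" using mu nu 1 2 by fastforce
    then show ?thesis using mu False by (simp add: field_simps)
  qed
qed

definition CL :: real where "CL = max 1 (1 / (rr * mu))"

lemma CL_pos: "CL \<ge> 1" unfolding CL_def by simp

lemma back_lip:
  assumes "a \<in> X" "b \<in> X" "s < 0" "flow_defined f X s a" "flow_defined f X s b"
  shows "norm (flow f X s a - flow f X s b) \<le> CL * norm (a - b)"
proof -
  define \<rho> where "\<rho> = norm (a - b) / rr"
  have "b + \<rho> *\<^sub>R v - a \<in> K" using U_ge U_upper unfolding \<rho>_def by blast
  from mono_step(1)[OF assms this] have 1: "flow f X s b + \<rho> *\<^sub>R v - flow f X s a \<in> K" .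
  have "a + \<rho> *\<^sub>R v - b \<in> K" using U_ge U_upper unfolding \<rho>_def by (metis norm_minus_commute)
  from mono_step(1)[OF assms(2,1,3,5,4) this] have 2: "flow f X s a + \<rho> *\<^sub>R v - flow f X s b \<in> K" .
  have "norm (flow f X s a - flow f X s b) \<le> \<rho> / mu"
    by (rule normal) (use 1 2 in \<open>simp_all add: algebra_simps\<close>)
  also have "\<dots> = (1 / (rr * mu)) * norm (a - b)" unfolding \<rho>_def by simp
  also have "\<dots> \<le> CL * norm (a - b)" unfolding CL_def by (intro mult_right_mono) auto
  finally show ?thesis .
qed


end

locale traj = sys +
  fixes \<xi> :: 'a and I0 :: "real set" and x0 :: "real \<Rightarrow> 'a"
  assumes sol0: "is_solution f X I0 x0 \<xi>" and I0_sub: "{0..} \<subseteq> I0"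
begin

lemma x0_X: "t \<ge> 0 \<Longrightarrow> x0 t \<in> X"
  using sol_in_X[OF sol0] I0_sub by auto

lemma x0_0: "x0 0 = \<xi>" using sol0 unfolding is_solution_def by simp

lemma traj_flow:
  assumes t: "t \<ge> 0" and ts: "t + s \<ge> 0"
  shows "flow_defined f X s (x0 t + c *\<^sub>R v) \<and> flow f X s (x0 t + c *\<^sub>R v) = x0 (t + s) + c *\<^sub>R v"
proof -
  have tI: "t \<in> I0" using t I0_sub by auto
  have "s \<in> (+) (- t) ` I0" using ts I0_sub by (force intro: image_eqI[of _ _ "t + s"])
  from sol_flow[OF sol_shift[OF sol0 tI] this]
  have "flow_defined f X s (x0 t) \<and> flow f X s (x0 t) = x0 (t + s)" by (simp add: add.commute)
  then show ?thesis using flow_transl[OF x0_X[OF t]] by metis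
qed

lemma x0_cont: "continuous_on I0 x0"
proof (rule continuous_on_vector_derivative)
  fix t assume "t \<in> I0"
  then have "(x0 has_vector_derivative f (x0 t)) (at t)" using sol0 unfolding is_solution_def by blast
  then show "(x0 has_vector_derivative f (x0 t)) (at t within I0)" by (rule has_vector_derivative_at_within)
qed

lemma x0_bounded_on: "a \<ge> 0 \<Longrightarrow> \<exists>B. \<forall>t\<in>{a..b}. norm (x0 t) \<le> B"
proof -
  assume "a \<ge> 0"
  then have "{a..b} \<subseteq> I0" using I0_sub by auto
  then have "compact (x0 ` {a..b})"
    by (intro compact_continuous_image continuous_on_subset[OF x0_cont]) auto
  then have "bounded (x0 ` {a..b})" by (rule compact_imp_bounded)
  then obtain B where "\<forall>y\<in>x0 ` {a..b}. norm y \<le> B" unfolding bounded_iff by blast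
  then show ?thesis by auto
qed

lemma limit_solution:
  fixes T c :: "nat \<Rightarrow> real"
  assumes T2: "\<And>k. T k \<ge> 2"
    and conv: "(\<lambda>k. x0 (T k) - c k *\<^sub>R v) \<longlonglongrightarrow> p0"
  shows "\<exists>z. \<forall>\<sigma>\<in>{-2<..<0}. (\<lambda>k. x0 (T k + \<sigma>) - c k *\<^sub>R v) \<longlonglongrightarrow> z \<sigma> \<and> z \<sigma> \<in> X
            \<and> (z has_vector_derivative f (z \<sigma>)) (at \<sigma>)"
proof -
  define Y where "Y k \<sigma> = x0 (T k + \<sigma>) - c k *\<^sub>R v" for k \<sigma>
  define S :: "real set" where "S = {-2<..<0}"
  have YX: "Y k \<sigma> \<in> X" if "\<sigma> \<ge> -2" for k \<sigma>
    unfolding Y_def using X_transl[OF x0_X, of "T k + \<sigma>" "- c k"] T2[of k] that by simp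
  have Yflow: "flow_defined f X \<sigma> (Y k 0) \<and> flow f X \<sigma> (Y k 0) = Y k \<sigma>" if "\<sigma> \<ge> -2" for k \<sigma>
    unfolding Y_def using traj_flow[of "T k" \<sigma> "- c k"] T2[of k] that by simp
  have lip: "norm (Y k \<sigma> - Y j \<sigma>) \<le> CL * norm (Y k 0 - Y j 0)" if "\<sigma> \<in> S" for k j \<sigma>
  proof -
    have "\<sigma> < 0" "\<sigma> \<ge> -2" using that unfolding S_def by auto
    moreover have "Y k 0 \<in> X" "Y j 0 \<in> X" using YX by auto
    ultimately show ?thesis using back_lip[of "Y k 0" "Y j 0" \<sigma>] Yflow[of \<sigma> k] Yflow[of \<sigma> j]
      by auto
  qed
  have conv0: "(\<lambda>k. Y k 0) \<longlonglongrightarrow> p0" using conv unfolding Y_def by simp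
  have cauchy: "Cauchy (\<lambda>k. Y k \<sigma>)" if "\<sigma> \<in> S" for \<sigma>
  proof (rule CauchyI)
    fix e :: real assume e: "e > 0"
    then have "e / CL > 0" using CL_pos by simp
    from CauchyD[OF LIMSEQ_imp_Cauchy[OF conv0] this] obtain M where
      M: "\<forall>m\<ge>M. \<forall>n\<ge>M. norm (Y m 0 - Y n 0) < e / CL" by blast
    show "\<exists>M. \<forall>m\<ge>M. \<forall>n\<ge>M. norm (Y m \<sigma> - Y n \<sigma>) < e"
    proof (intro exI allI impI)
      fix m n assume "m \<ge> M" "n \<ge> M"
      then have "CL * norm (Y m 0 - Y n 0) < e" using M CL_pos by (simp add: field_simps)
      then show "norm (Y m \<sigma> - Y n \<sigma>) < e" using lip[OF that, of m n] by simp
    qed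
  qed
  define z where "z \<sigma> = lim (\<lambda>k. Y k \<sigma>)" for \<sigma>
  have zlim: "(\<lambda>k. Y k \<sigma>) \<longlonglongrightarrow> z \<sigma>" if "\<sigma> \<in> S" for \<sigma>
    using cauchy[OF that] unfolding z_def Cauchy_convergent_iff convergent_LIMSEQ_iff .
  have zX: "z \<sigma> \<in> X" if "\<sigma> \<in> S" for \<sigma>
    using closed_sequentially[OF X_closed _ zlim[OF that]] YX that unfolding S_def by auto
  have unif: "norm (Y k \<sigma> - z \<sigma>) \<le> CL * norm (Y k 0 - p0)" if "\<sigma> \<in> S" for k \<sigma>
  proof -
    have "(\<lambda>j. norm (Y k \<sigma> - Y j \<sigma>)) \<longlonglongrightarrow> norm (Y k \<sigma> - z \<sigma>)"
      by (intro tendsto_intros zlim that)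
    moreover have "(\<lambda>j. CL * norm (Y k 0 - Y j 0)) \<longlonglongrightarrow> CL * norm (Y k 0 - p0)"
      by (intro tendsto_intros conv0)
    ultimately show ?thesis using lip[OF that] by (intro LIMSEQ_le) auto
  qed
  obtain B0 where B0: "\<And>k. norm (Y k 0 - p0) \<le> B0"
  proof -
    have "convergent (\<lambda>k. Y k 0 - p0)" using conv0 by (intro convergent_diff) (auto simp: convergent_def)
    then have "Bseq (\<lambda>k. Y k 0 - p0)" by (rule convergent_imp_Bseq)
    then show ?thesis using that unfolding Bseq_def by (meson less_imp_le)
  qed
  obtain Bx where Bx: "\<And>t. t \<in> {T 0 - 2..T 0} \<Longrightarrow> norm (x0 t) \<le> Bx"
  proof -
    have "T 0 - 2 \<ge> 0" using T2[of 0] by simp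
    from x0_bounded_on[OF this, of "T 0"] obtain B where "\<forall>t\<in>{T 0 - 2..T 0}. norm (x0 t) \<le> B" by blast
    then show ?thesis using that by blast
  qed
  define R where "R = Bx + \<bar>c 0\<bar> + 2 * CL * B0"
  have Y0b: "norm (Y 0 \<sigma>) \<le> Bx + \<bar>c 0\<bar>" if "\<sigma> \<in> S" for \<sigma>
  proof -
    have "norm (Y 0 \<sigma>) \<le> norm (x0 (T 0 + \<sigma>)) + norm (c 0 *\<^sub>R v)"
      unfolding Y_def by (rule norm_triangle_ineq4)
    also have "\<dots> \<le> Bx + \<bar>c 0\<bar>" using Bx[of "T 0 + \<sigma>"] that v_norm unfolding S_def by auto
    finally show ?thesis .
  qed
  have ub: "norm (Y k \<sigma> - z \<sigma>) \<le> CL * B0" if "\<sigma> \<in> S" for k \<sigma>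
  proof -
    have "CL * norm (Y k 0 - p0) \<le> CL * B0" using B0[of k] CL_pos by (intro mult_left_mono) auto
    then show ?thesis using unif[OF that, of k] by linarith
  qed
  have zb: "norm (z \<sigma>) \<le> R" if "\<sigma> \<in> S" for \<sigma>
  proof -
    have "norm (z \<sigma>) \<le> norm (Y 0 \<sigma>) + norm (z \<sigma> - Y 0 \<sigma>)" by (rule norm_triangle_sub)
    moreover have "norm (z \<sigma> - Y 0 \<sigma>) = norm (Y 0 \<sigma> - z \<sigma>)" by (rule norm_minus_commute)
    moreover have "0 \<le> CL * B0" using ub[OF that, of 0] norm_ge_zero[of "Y 0 \<sigma> - z \<sigma>"] by linarith
    ultimately show ?thesis unfolding R_def using Y0b[OF that] ub[OF that, of 0] by linarith
  qed
  have Yb: "norm (Y k \<sigma>) \<le> R" if "\<sigma> \<in> S" for k \<sigma>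
  proof -
    have "norm (Y k \<sigma>) \<le> norm (z \<sigma>) + norm (Y k \<sigma> - z \<sigma>)" by (rule norm_triangle_sub)
    moreover have "norm (z \<sigma>) \<le> norm (Y 0 \<sigma>) + norm (z \<sigma> - Y 0 \<sigma>)" by (rule norm_triangle_sub)
    moreover have "norm (z \<sigma> - Y 0 \<sigma>) = norm (Y 0 \<sigma> - z \<sigma>)" by (rule norm_minus_commute)
    ultimately show ?thesis unfolding R_def using Y0b[OF that] ub[OF that, of 0] ub[OF that, of k] by linarith
  qed
  define KC where "KC = X \<inter> cball 0 R"
  have KC: "compact KC" unfolding KC_def
    by (intro closed_Int_compact X_closed compact_cball)
  have uc: "uniformly_continuous_on KC f"
    by (rule compact_uniformly_continuous[OF continuous_on_subset[OF f_cont] KC]) (auto simp: KC_def)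
  have fconv: "\<forall>\<^sub>F n in sequentially. \<forall>\<sigma>\<in>S. \<forall>h. norm (h *\<^sub>R f (Y n \<sigma>) - h *\<^sub>R f (z \<sigma>)) \<le> e * norm h"
    if e: "e > 0" for e
  proof -
    obtain d where d: "d > 0" "\<forall>x\<in>KC. \<forall>x'\<in>KC. dist x' x < d \<longrightarrow> dist (f x') (f x) < e"
      using uc e unfolding uniformly_continuous_on_def by blast
    have "d / CL > 0" using d CL_pos by simp
    then have "\<forall>\<^sub>F n in sequentially. dist (Y n 0) p0 < d / CL"
      using conv0 unfolding tendsto_iff by blast
    then show ?thesis
    proof eventually_elim
      case (elim n)
      show ?case
      proof (intro ballI allI)
        fix \<sigma> h assume sS: "\<sigma> \<in> S"
        have "norm (Y n \<sigma> - z \<sigma>) < d"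
          using unif[OF sS, of n] elim CL_pos by (simp add: dist_norm field_simps)
        moreover have "Y n \<sigma> \<in> KC" "z \<sigma> \<in> KC"
          using YX Yb zX zb sS unfolding KC_def S_def by auto
        ultimately have "dist (f (Y n \<sigma>)) (f (z \<sigma>)) < e" using d by (auto simp: dist_norm)
        then have "norm (f (Y n \<sigma>) - f (z \<sigma>)) \<le> e" by (simp add: dist_norm)
        then have "\<bar>h\<bar> * norm (f (Y n \<sigma>) - f (z \<sigma>)) \<le> \<bar>h\<bar> * e" by (intro mult_left_mono) auto
        then show "norm (h *\<^sub>R f (Y n \<sigma>) - h *\<^sub>R f (z \<sigma>)) \<le> e * norm h"
          by (simp add: scaleR_diff_right[symmetric] mult.commute)
      qed
    qed
  qed
  have Yder: "((Y n) has_derivative (\<lambda>h. h *\<^sub>R f (Y n \<sigma>))) (at \<sigma> within S)" if sS: "\<sigma> \<in> S" for n \<sigma>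
  proof -
    have TI: "T n \<in> I0" using T2[of n] I0_sub by auto
    have sol: "is_solution f X ((+) (- T n) ` I0) (\<lambda>t. x0 (t + T n) + (- c n) *\<^sub>R v) (x0 (T n) + (- c n) *\<^sub>R v)"
      by (rule sol_transl[OF sol_shift[OF sol0 TI]])
    have "\<sigma> \<in> (+) (- T n) ` I0" using sS T2[of n] I0_sub unfolding S_def
      by (force intro: image_eqI[of _ _ "T n + \<sigma>"])
    then have "((\<lambda>t. x0 (t + T n) + (- c n) *\<^sub>R v) has_vector_derivative f (x0 (\<sigma> + T n) + (- c n) *\<^sub>R v)) (at \<sigma>)"
      using sol unfolding is_solution_def by blast
    moreover have "(\<lambda>t. x0 (t + T n) + (- c n) *\<^sub>R v) = Y n" unfolding Y_def by (auto simp: add.commute)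
    ultimately have "(Y n has_vector_derivative f (Y n \<sigma>)) (at \<sigma>)" unfolding Y_def by (simp add: add.commute)
    then show ?thesis unfolding has_vector_derivative_def by (rule has_derivative_at_withinI)
  qed
  have m1: "-1 \<in> S" unfolding S_def by simp
  have "\<exists>g. \<forall>\<sigma>\<in>S. (\<lambda>n. Y n \<sigma>) \<longlonglongrightarrow> g \<sigma> \<and> (g has_derivative (\<lambda>h. h *\<^sub>R f (z \<sigma>))) (at \<sigma> within S)"
    using has_derivative_sequence[of S Y "\<lambda>n \<sigma> h. h *\<^sub>R f (Y n \<sigma>)" "\<lambda>\<sigma> h. h *\<^sub>R f (z \<sigma>)" "-1" "z (-1)",
      OF _ Yder fconv m1 zlim[OF m1]] unfolding S_def by simp
  then obtain g where g: "\<forall>\<sigma>\<in>S. (\<lambda>n. Y n \<sigma>) \<longlonglongrightarrow> g \<sigma> \<and> (g has_derivative (\<lambda>h. h *\<^sub>R f (z \<sigma>))) (at \<sigma> within S)"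
    by blast
  have gz: "g \<sigma> = z \<sigma>" if "\<sigma> \<in> S" for \<sigma>
    using g that zlim[OF that] LIMSEQ_unique by blast
  have oS: "open S" unfolding S_def by simp
  have zder: "(z has_vector_derivative f (z \<sigma>)) (at \<sigma>)" if sS: "\<sigma> \<in> S" for \<sigma>
  proof -
    have "(g has_derivative (\<lambda>h. h *\<^sub>R f (z \<sigma>))) (at \<sigma>)"
      using g sS at_within_open[OF sS oS] by metis
    then have "(g has_vector_derivative f (z \<sigma>)) (at \<sigma>)" unfolding has_vector_derivative_def .
    then show ?thesis by (rule has_vector_derivative_transform_within_open[OF _ oS sS]) (use gz in auto)
  qed
  show ?thesis
    by (rule exI[of _ z]) (use zlim zX zder in \<open>auto simp: Y_def S_def\<close>)
qed


lemma U_tendsto: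
  assumes "A \<longlonglongrightarrow> a" "B \<longlonglongrightarrow> b"
  shows "(\<lambda>k. U (A k) (B k)) \<longlonglongrightarrow> U a b"
proof -
  have "(\<lambda>k. U (A k) (B k) - U a b) \<longlonglongrightarrow> 0"
  proof (rule Lim_null_comparison)
    show "\<forall>\<^sub>F k in sequentially. norm (U (A k) (B k) - U a b) \<le> (norm (A k - a) + norm (B k - b)) / rr"
      using U_lip by simp
    have "(\<lambda>k. norm (A k - a)) \<longlonglongrightarrow> 0" "(\<lambda>k. norm (B k - b)) \<longlonglongrightarrow> 0"
      using assms by (auto intro: tendsto_norm_zero LIM_zero)
    then have "(\<lambda>k. norm (A k - a) + norm (B k - b)) \<longlonglongrightarrow> 0" using tendsto_add by fastforce
    from tendsto_divide_zero[OF this, of rr]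
    show "(\<lambda>k. (norm (A k - a) + norm (B k - b)) / rr) \<longlonglongrightarrow> 0" by simp
  qed
  then show ?thesis by (rule LIM_zero_cancel)
qed

lemma limsol_flow:
  assumes z: "\<forall>\<sigma>\<in>{-2<..<0}. z \<sigma> \<in> X \<and> (z has_vector_derivative f (z \<sigma>)) (at \<sigma>)"
  shows "flow_defined f X (-1/2) (z (-1/2)) \<and> flow f X (-1/2) (z (-1/2)) = z (-1)"
proof -
  have sol: "is_solution f X {-3/2<..<1/2} (\<lambda>\<tau>. z (\<tau> - 1/2)) (z (-1/2))"
    unfolding is_solution_def
  proof (intro conjI ballI)
    fix t :: real assume t: "t \<in> {-3/2<..<1/2}"
    then have tt: "t - 1/2 \<in> {-2<..<0}" by auto
    then show "z (t - 1/2) \<in> X" using z by blast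
    have d: "(z has_vector_derivative f (z (t - 1/2))) (at (t - 1/2))" using z tt by blast
    have "((\<lambda>t. t - 1/2) has_vector_derivative 1) (at t)"
      by (auto intro!: derivative_eq_intros simp: has_real_derivative_iff_has_vector_derivative[symmetric])
    from vector_diff_chain_at[OF this] d
    show "((\<lambda>\<tau>. z (\<tau> - 1/2)) has_vector_derivative f (z (t - 1/2))) (at t)"
      by (simp add: o_def)
  qed auto
  have "(-1/2::real) \<in> {-3/2<..<1/2}" by simp
  from sol_flow[OF sol this] show ?thesis by simp
qed

end

context traj begin

lemma traj_U_mono:
  assumes "0 \<le> s" "s \<le> t" "d1 \<ge> 0" "d2 \<ge> 0"
  shows "U (x0 (s + d1)) (x0 (s + d2)) \<le> U (x0 (t + d1)) (x0 (t + d2))"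
proof (cases "s = t")
  case True then show ?thesis by simp
next
  case False
  then have st: "s - t < 0" using assms by simp
  have 1: "flow_defined f X (s - t) (x0 (t + d1)) \<and> flow f X (s - t) (x0 (t + d1)) = x0 (s + d1)"
    using traj_flow[of "t + d1" "s - t" 0] assms by (simp add: algebra_simps)
  have 2: "flow_defined f X (s - t) (x0 (t + d2)) \<and> flow f X (s - t) (x0 (t + d2)) = x0 (s + d2)"
    using traj_flow[of "t + d2" "s - t" 0] assms by (simp add: algebra_simps)
  have "x0 (t + d1) \<in> X" "x0 (t + d2) \<in> X" using x0_X assms by auto
  from U_back[OF this st] 1 2 show ?thesis by simp
qed

lemma proj_decomp: "y = proj_v v y + (v \<bullet> y) *\<^sub>R v"
  unfolding proj_v_def by simp

lemma U_proj: "U a b = U (proj_v v a) (proj_v v b) + v \<bullet> a - v \<bullet> b"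
  using U_transl[of "proj_v v a" "v \<bullet> a" "proj_v v b" "v \<bullet> b"] proj_decomp[of a] proj_decomp[of b]
  by simp

lemma main_const:
  assumes P: "\<And>t. t \<ge> 0 \<Longrightarrow> norm (proj_v v (x0 t)) \<le> P" and dpos: "\<delta> > 0"
  shows "x0 \<delta> = \<xi> + U (x0 \<delta>) \<xi> *\<^sub>R v"
proof -
  define u where "u t = U (x0 (t + \<delta>)) (x0 t)" for t
  define w where "w t = U (x0 t) (x0 (t + \<delta>))" for t
  have umono: "u s \<le> u t" if "0 \<le> s" "s \<le> t" for s t
    using traj_U_mono[OF that, of \<delta> 0] dpos unfolding u_def by simp
  have wmono: "w s \<le> w t" if "0 \<le> s" "s \<le> t" for s t
    using traj_U_mono[OF that, of 0 \<delta>] dpos unfolding w_def by simp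
  have pdiff: "norm (proj_v v (x0 a) - proj_v v (x0 b)) \<le> 2 * P" if "a \<ge> 0" "b \<ge> 0" for a b
    using norm_triangle_ineq4[of "proj_v v (x0 a)" "proj_v v (x0 b)"] P[OF that(1)] P[OF that(2)] by simp
  have Ubd: "\<bar>U (proj_v v (x0 a)) (proj_v v (x0 b))\<bar> \<le> 2 * P / rr" if "a \<ge> 0" "b \<ge> 0" for a b
    using U_abs[of "proj_v v (x0 a)" "proj_v v (x0 b)"] pdiff[OF that] rr_pos
    by (meson divide_right_mono less_imp_le order_trans)
  have sum_bd: "u t + w t \<le> 4 * P / rr" if "t \<ge> 0" for t
  proof -
    have "u t + w t = U (proj_v v (x0 (t + \<delta>))) (proj_v v (x0 t)) + U (proj_v v (x0 t)) (proj_v v (x0 (t + \<delta>)))"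
      unfolding u_def w_def using U_proj[of "x0 (t + \<delta>)" "x0 t"] U_proj[of "x0 t" "x0 (t + \<delta>)"] by simp
    then show ?thesis using Ubd[of "t + \<delta>" t] Ubd[of t "t + \<delta>"] that dpos by simp
  qed
  have ubd: "u t \<le> 4 * P / rr - w 0" if "t \<ge> 0" for t using sum_bd[OF that] wmono[OF _ that] by simp
  have wbd: "w t \<le> 4 * P / rr - u 0" if "t \<ge> 0" for t using sum_bd[OF that] umono[OF _ that] by simp
  define Lu where "Lu = Sup (u ` {0..})"
  define Lw where "Lw = Sup (w ` {0..})"
  have ulim: "(u \<longlongrightarrow> Lu) at_top" and ule: "\<And>t. 0 \<le> t \<Longrightarrow> u t \<le> Lu"
    using mono_sup_lim[of u, OF umono ubd] unfolding Lu_def by auto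
  have wlim: "(w \<longlongrightarrow> Lw) at_top" and wle: "\<And>t. 0 \<le> t \<Longrightarrow> w t \<le> Lw"
    using mono_sup_lim[of w, OF wmono wbd] unfolding Lw_def by auto
  define tk where "tk k = real k + 2" for k :: nat
  define c where "c k = v \<bullet> x0 (tk k)" for k
  define p where "p k = x0 (tk k) - c k *\<^sub>R v" for k
  define q where "q k = x0 (tk k + \<delta>) - c k *\<^sub>R v" for k
  define Q where "Q = P + \<bar>u 0\<bar> + \<bar>Lu\<bar> + 2 * P / rr"
  have pb: "norm (p k) \<le> P" for k
    using P[of "tk k"] unfolding p_def c_def tk_def proj_v_def by simp
  have qb: "norm (q k) \<le> Q" for k
  proof -
    have t0: "tk k \<ge> 0" "tk k + \<delta> \<ge> 0" unfolding tk_def using dpos by auto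
    have qe: "q k = proj_v v (x0 (tk k + \<delta>)) + (v \<bullet> x0 (tk k + \<delta>) - v \<bullet> x0 (tk k)) *\<^sub>R v"
      unfolding q_def c_def proj_v_def by (simp add: algebra_simps)
    have ce: "v \<bullet> x0 (tk k + \<delta>) - v \<bullet> x0 (tk k) = u (tk k) - U (proj_v v (x0 (tk k + \<delta>))) (proj_v v (x0 (tk k)))"
      unfolding u_def using U_proj[of "x0 (tk k + \<delta>)" "x0 (tk k)"] by simp
    have "u 0 \<le> u (tk k)" "u (tk k) \<le> Lu" using umono[of 0 "tk k"] ule[of "tk k"] t0 by auto
    then have "\<bar>v \<bullet> x0 (tk k + \<delta>) - v \<bullet> x0 (tk k)\<bar> \<le> \<bar>u 0\<bar> + \<bar>Lu\<bar> + 2 * P / rr"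
      using ce Ubd[OF t0(2) t0(1)] by linarith
    moreover have "norm (q k) \<le> norm (proj_v v (x0 (tk k + \<delta>))) + \<bar>v \<bullet> x0 (tk k + \<delta>) - v \<bullet> x0 (tk k)\<bar>"
      unfolding qe using norm_triangle_ineq[of "proj_v v (x0 (tk k + \<delta>))" "(v \<bullet> x0 (tk k + \<delta>) - v \<bullet> x0 (tk k)) *\<^sub>R v"] v_norm by simp
    ultimately show ?thesis unfolding Q_def using P[OF t0(2)] by linarith
  qed
  have "seq_compact (cball (0::'a) P \<times> cball (0::'a) Q)"
    by (intro compact_imp_seq_compact compact_Times compact_cball)
  moreover have "\<forall>k. (p k, q k) \<in> cball 0 P \<times> cball 0 Q" using pb qb by auto
  ultimately obtain l r where r: "strict_mono r" and lr: "((\<lambda>k. (p k, q k)) \<circ> r) \<longlonglongrightarrow> l"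
    by (rule seq_compactE)
  have plim: "(\<lambda>k. p (r k)) \<longlonglongrightarrow> fst l" using tendsto_fst[OF lr] by (simp add: o_def)
  have qlim: "(\<lambda>k. q (r k)) \<longlonglongrightarrow> snd l" using tendsto_snd[OF lr] by (simp add: o_def)
  obtain z where z: "\<forall>\<sigma>\<in>{-2<..<0}. (\<lambda>k. x0 (tk (r k) + \<sigma>) - c (r k) *\<^sub>R v) \<longlonglongrightarrow> z \<sigma> \<and> z \<sigma> \<in> X
      \<and> (z has_vector_derivative f (z \<sigma>)) (at \<sigma>)"
    using limit_solution[of "\<lambda>k. tk (r k)" "\<lambda>k. c (r k)" "fst l"] plim unfolding p_def tk_def
    by auto
  obtain z' where z': "\<forall>\<sigma>\<in>{-2<..<0}. (\<lambda>k. x0 (tk (r k) + \<delta> + \<sigma>) - c (r k) *\<^sub>R v) \<longlonglongrightarrow> z' \<sigma> \<and> z' \<sigma> \<in> X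
      \<and> (z' has_vector_derivative f (z' \<sigma>)) (at \<sigma>)"
    using limit_solution[of "\<lambda>k. tk (r k) + \<delta>" "\<lambda>k. c (r k)" "snd l"] qlim dpos unfolding q_def tk_def
    by auto
  have Tlim: "filterlim (\<lambda>k. tk (r k) + \<sigma>) at_top sequentially" if "\<sigma> \<ge> -2" for \<sigma>
  proof (rule filterlim_at_top_mono[OF filterlim_real_sequentially])
    show "\<forall>\<^sub>F k in sequentially. real k \<le> tk (r k) + \<sigma>"
      using seq_suble[OF r] that unfolding tk_def
      by (auto intro!: always_eventually simp: le_diff_eq) (smt (verit) of_nat_le_iff)
  qed
  have Ulim_u: "U (z' \<sigma>) (z \<sigma>) = Lu" if s: "\<sigma> \<in> {-2<..<0}" for \<sigma>
  proof -
    have "(\<lambda>k. U (x0 (tk (r k) + \<delta> + \<sigma>) - c (r k) *\<^sub>R v) (x0 (tk (r k) + \<sigma>) - c (r k) *\<^sub>R v))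
        \<longlonglongrightarrow> U (z' \<sigma>) (z \<sigma>)"
      using z s z' by (intro U_tendsto) auto
    moreover have "U (x0 (tk (r k) + \<delta> + \<sigma>) - c (r k) *\<^sub>R v) (x0 (tk (r k) + \<sigma>) - c (r k) *\<^sub>R v)
        = u (tk (r k) + \<sigma>)" for k
      using U_transl[of "x0 (tk (r k) + \<delta> + \<sigma>)" "- c (r k)" "x0 (tk (r k) + \<sigma>)" "- c (r k)"]
      unfolding u_def by (simp add: algebra_simps)
    moreover have "(\<lambda>k. u (tk (r k) + \<sigma>)) \<longlonglongrightarrow> Lu"
      using filterlim_compose[OF ulim Tlim] s by auto
    ultimately show ?thesis using LIMSEQ_unique by fastforce
  qed
  have Ulim_w: "U (z \<sigma>) (z' \<sigma>) = Lw" if s: "\<sigma> \<in> {-2<..<0}" for \<sigma>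
  proof -
    have "(\<lambda>k. U (x0 (tk (r k) + \<sigma>) - c (r k) *\<^sub>R v) (x0 (tk (r k) + \<delta> + \<sigma>) - c (r k) *\<^sub>R v))
        \<longlonglongrightarrow> U (z \<sigma>) (z' \<sigma>)"
      using z s z' by (intro U_tendsto) auto
    moreover have "U (x0 (tk (r k) + \<sigma>) - c (r k) *\<^sub>R v) (x0 (tk (r k) + \<delta> + \<sigma>) - c (r k) *\<^sub>R v)
        = w (tk (r k) + \<sigma>)" for k
      using U_transl[of "x0 (tk (r k) + \<sigma>)" "- c (r k)" "x0 (tk (r k) + \<delta> + \<sigma>)" "- c (r k)"]
      unfolding w_def by (simp add: algebra_simps)
    moreover have "(\<lambda>k. w (tk (r k) + \<sigma>)) \<longlonglongrightarrow> Lw"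
      using filterlim_compose[OF wlim Tlim] s by auto
    ultimately show ?thesis using LIMSEQ_unique by fastforce
  qed
  have h1: "(-1/2::real) \<in> {-2<..<0}" "(-1::real) \<in> {-2<..<0}" by auto
  have fz: "flow_defined f X (-1/2) (z (-1/2)) \<and> flow f X (-1/2) (z (-1/2)) = z (-1)"
    by (rule limsol_flow) (use z in blast)
  have fz': "flow_defined f X (-1/2) (z' (-1/2)) \<and> flow f X (-1/2) (z' (-1/2)) = z' (-1)"
    by (rule limsol_flow) (use z' in blast)
  have eqz: "z (-1/2) + Lu *\<^sub>R v = z' (-1/2)"
  proof (rule ccontr)
    assume ne: "z (-1/2) + Lu *\<^sub>R v \<noteq> z' (-1/2)"
    have "U (flow f X (-1/2) (z' (-1/2))) (flow f X (-1/2) (z (-1/2))) < U (z' (-1/2)) (z (-1/2))"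
      by (rule U_back_strict) (use z z' h1 fz fz' ne Ulim_u[OF h1(1)] in auto)
    then have "U (z' (-1)) (z (-1)) < U (z' (-1/2)) (z (-1/2))" using fz fz' by simp
    then show False using Ulim_u[OF h1(1)] Ulim_u[OF h1(2)] by simp
  qed
  have "Lw = - Lu" using Ulim_w[OF h1(1)] U_self_shift[of "z (-1/2)" Lu] eqz by simp
  moreover have "u 0 \<le> Lu" "w 0 \<le> Lw" using ule wle by auto
  moreover have "u 0 + w 0 \<ge> 0" unfolding u_def w_def by (rule U_sum_nonneg)
  ultimately have "u 0 + w 0 = 0" by linarith
  then have "x0 (0 + \<delta>) = x0 0 + U (x0 (0 + \<delta>)) (x0 0) *\<^sub>R v"
    unfolding u_def w_def by (rule U_sum_zero)
  then show ?thesis using x0_0 by simp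
qed

end

context sys begin

lemma vv: "v \<bullet> v = 1" using v_norm by (simp add: norm_eq_sqrt_inner)

lemma equil_sol:
  assumes e: "proj_equilibrium f X v e"
  shows "flow_defined f X (-1) e \<and> flow f X (-1) e = e + (- (v \<bullet> f e)) *\<^sub>R v"
proof -
  define c where "c = v \<bullet> f e"
  have eX: "e \<in> X" and fe: "f e = c *\<^sub>R v" using e unfolding proj_equilibrium_def c_def by auto
  have sol: "is_solution f X UNIV (\<lambda>t. e + (t * c) *\<^sub>R v) e"
    unfolding is_solution_def
  proof (intro conjI ballI)
    fix t :: real
    show "e + (t * c) *\<^sub>R v \<in> X" using X_transl[OF eX] by blast
    have "((\<lambda>t. e + (t * c) *\<^sub>R v) has_vector_derivative c *\<^sub>R v) (at t)"
      by (auto intro!: derivative_eq_intros)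
    then show "((\<lambda>t. e + (t * c) *\<^sub>R v) has_vector_derivative f (e + (t * c) *\<^sub>R v)) (at t)"
      using f_transl[OF eX] fe by simp
  qed auto
  from sol_flow[OF sol, of "-1"] show ?thesis unfolding c_def by simp
qed

lemma equil_dir:
  assumes e1: "proj_equilibrium f X v e1" and e2: "proj_equilibrium f X v e2" and ne: "e1 \<noteq> e2"
  shows "v \<bullet> f e2 < v \<bullet> f e1"
proof -
  have X: "e1 \<in> X" "e2 \<in> X" and o: "v \<bullet> e1 = 0" "v \<bullet> e2 = 0"
    using e1 e2 unfolding proj_equilibrium_def by auto
  have "e2 + U e1 e2 *\<^sub>R v \<noteq> e1"
  proof
    assume h: "e2 + U e1 e2 *\<^sub>R v = e1"
    then have "v \<bullet> (e2 + U e1 e2 *\<^sub>R v) = v \<bullet> e1" by simp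
    then have "U e1 e2 = 0" using o vv by (simp add: inner_add_right)
    then show False using h ne by simp
  qed
  from U_back_strict[OF X _ _ _ this, of "-1"] equil_sol[OF e1] equil_sol[OF e2]
  have "U (e1 + (- (v \<bullet> f e1)) *\<^sub>R v) (e2 + (- (v \<bullet> f e2)) *\<^sub>R v) < U e1 e2" by simp
  then show ?thesis using U_transl[of e1 "- (v \<bullet> f e1)" e2 "- (v \<bullet> f e2)"] by simp
qed

lemma equil_unique:
  assumes "proj_equilibrium f X v e1" "proj_equilibrium f X v e2"
  shows "e1 = e2"
  using equil_dir[OF assms] equil_dir[OF assms(2,1)] by force

end

theorem corollary2:
  fixes f :: "'a::euclidean_space \<Rightarrow> 'a" and X K :: "'a set" and v :: 'a
  assumes X_closed: "closed X" and X_reg: "X = closure (interior X)"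
    and f_lip: "local_lipschitz (UNIV::real set) X (\<lambda>_. f)"
    and fc: "forward_complete f X"
    and K_cone: "is_cone_K K" and K_closed: "closed K" and K_convex: "convex K"
    and K_int: "interior K \<noteq> {}"
    and mono: "\<And>\<xi>1 \<xi>2 t. \<xi>1 \<in> X \<Longrightarrow> \<xi>2 \<in> X \<Longrightarrow> t < 0 \<Longrightarrow>
        flow_defined f X t \<xi>1 \<Longrightarrow> flow_defined f X t \<xi>2 \<Longrightarrow>
        succ K \<xi>1 \<xi>2 \<Longrightarrow> gg K (flow f X t \<xi>1) (flow f X t \<xi>2)"
    and v_int: "v \<in> interior K" and v_norm: "norm v = 1"
    and X_transl: "\<And>\<xi> c. \<xi> \<in> X \<Longrightarrow> \<xi> + c *\<^sub>R v \<in> X"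
    and flow_transl: "\<And>\<xi> c t. \<xi> \<in> X \<Longrightarrow> flow_defined f X t \<xi> \<Longrightarrow>
        flow_defined f X t (\<xi> + c *\<^sub>R v) \<and>
        flow f X t (\<xi> + c *\<^sub>R v) = flow f X t \<xi> + c *\<^sub>R v"
  shows "\<forall>\<xi>\<in>X. bounded ((\<lambda>t. proj_v v (flow f X t \<xi>)) ` {0..}) \<longrightarrow>
           (\<exists>e. proj_equilibrium f X v e \<and>
                ((\<lambda>t. proj_v v (flow f X t \<xi>)) \<longlongrightarrow> e) at_top \<and>
                (\<forall>e'. proj_equilibrium f X v e' \<longrightarrow> e' = e))"
proof (intro ballI impI)
  have fcont: "continuous_on X f" using local_lipschitz_continuous_on[OF f_lip, of 0] by simp
  interpret sys f X K v
    by (unfold_locales) (use assms fcont in auto)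
  fix \<xi> assume xi: "\<xi> \<in> X" and bd: "bounded ((\<lambda>t. proj_v v (flow f X t \<xi>)) ` {0..})"
  obtain I0 x0 where s0: "is_solution f X I0 x0 \<xi>" "{0..} \<subseteq> I0"
    using fc xi unfolding forward_complete_def by blast
  interpret traj f X K v \<xi> I0 x0 by unfold_locales (use s0 in auto)
  have fl: "flow f X t \<xi> = x0 t" if "t \<ge> 0" for t using sol_flow[OF s0(1)] s0(2) that by auto
  obtain P where P0: "\<forall>y\<in>(\<lambda>t. proj_v v (flow f X t \<xi>)) ` {0..}. norm y \<le> P"
    using bd unfolding bounded_iff by blast
  have P: "norm (proj_v v (x0 t)) \<le> P" if "t \<ge> 0" for t using P0 fl that by auto
  define e where "e = proj_v v \<xi>"
  have pv_shift: "proj_v v (y + c *\<^sub>R v) = proj_v v y" for y c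
    unfolding proj_v_def using vv by (simp add: inner_add_right algebra_simps)
  have const: "proj_v v (x0 t) = e" if "t \<ge> 0" for t
  proof (cases "t = 0")
    case True then show ?thesis using x0_0 e_def by simp
  next
    case False
    then have "x0 t = \<xi> + U (x0 t) \<xi> *\<^sub>R v" using main_const[OF P, of t] that by auto
    then show ?thesis unfolding e_def by (metis pv_shift)
  qed
  have eX: "e \<in> X" unfolding e_def proj_v_def using X_transl[OF xi, of "- (v \<bullet> \<xi>)"] by simp
  have ve: "v \<bullet> e = 0" unfolding e_def proj_v_def using vv by (simp add: inner_diff_right)
  have fe: "f e = f \<xi>" unfolding e_def proj_v_def using f_transl[OF xi, of "- (v \<bullet> \<xi>)"] by simp
  have pf: "f \<xi> - (v \<bullet> f \<xi>) *\<^sub>R v = 0"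
  proof -
    define g where "g t = x0 t - (v \<bullet> x0 t) *\<^sub>R v" for t
    have "(x0 has_vector_derivative f (x0 0)) (at 0)" using s0 unfolding is_solution_def by auto
    then have "(x0 has_vector_derivative f \<xi>) (at 0)" using x0_0 by simp
    moreover have "bounded_linear (proj_v v)"
    proof -
      have "bounded_linear (\<lambda>x. (v \<bullet> x) *\<^sub>R v)"
        using bounded_linear_compose[OF bounded_linear_scaleR_left bounded_linear_inner_right, of v v]
        by simp
      from bounded_linear_sub[OF bounded_linear_ident this] show ?thesis
        unfolding proj_v_def[abs_def] by simp
    qed
    ultimately have "((\<lambda>t. proj_v v (x0 t)) has_vector_derivative proj_v v (f \<xi>)) (at 0)"
      using bounded_linear.has_vector_derivative by blast
    then have "(g has_vector_derivative (f \<xi> - (v \<bullet> f \<xi>) *\<^sub>R v)) (at 0)"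
      unfolding g_def proj_v_def by simp
    then have d1: "(g has_vector_derivative (f \<xi> - (v \<bullet> f \<xi>) *\<^sub>R v)) (at 0 within {0..})"
      by (rule has_vector_derivative_at_within)
    have "((\<lambda>t. e) has_vector_derivative 0) (at 0 within {0..})" by (rule derivative_intros)
    then have d2: "(g has_vector_derivative 0) (at 0 within {0..})"
      by (rule has_vector_derivative_transform_within[of _ _ _ _ 1]) (use const in \<open>auto simp: g_def proj_v_def\<close>)
    have sub: "{0<..} \<subseteq> {(0::real)..}" by auto
    have "at (0::real) within {0<..} \<noteq> bot" using trivial_limit_at_right_real[of 0] by simp
    from vector_derivative_unique_within[OF this has_vector_derivative_within_subset[OF d1 sub]
        has_vector_derivative_within_subset[OF d2 sub]]
    show ?thesis .
  qed
  have eq: "proj_equilibrium f X v e" unfolding proj_equilibrium_def using eX ve fe pf by simp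
  show "\<exists>e. proj_equilibrium f X v e \<and> ((\<lambda>t. proj_v v (flow f X t \<xi>)) \<longlongrightarrow> e) at_top \<and>
                (\<forall>e'. proj_equilibrium f X v e' \<longrightarrow> e' = e)"
  proof (intro exI[of _ e] conjI allI impI)
    show "proj_equilibrium f X v e" by (rule eq)
    show "((\<lambda>t. proj_v v (flow f X t \<xi>)) \<longlongrightarrow> e) at_top"
    proof (rule tendsto_eventually)
      show "\<forall>\<^sub>F t in at_top. proj_v v (flow f X t \<xi>) = e"
        using eventually_ge_at_top[of 0] by eventually_elim (use fl const in auto)
    qed
    fix e' assume "proj_equilibrium f X v e'"
    then show "e' = e" using equil_unique eq by blast
  qed
qed

end
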